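(* Fix integers $0\le p<q$. The span of the elements $\mathbf S^f$ of $\mathbf{EFSym}$ with $f:[n]\to[n]$ ($n\ge0$) satisfying $f^p=f^q$ (powers under composition) is a Hopf subalgebra of $\mathbf{EFSym}$. In particular, the $\mathbf S^f$ with $f$ idempotent span a Hopf subalgebra.
   Context: $\mathbf{EFSym}$: over $A=\{a_{ij}:i\ne j,\ i,j\ge1\}$ with $a_{ij}\prec a_{kl}$ iff $j=k$, for $f:[n]\to[n]$, $\mathbf S^f$ is the sum of words $w_1\cdots w_n$ over $A$ with $w_{f(j)}\prec w_j$ whenever $f(j)\ne j$; the $\mathbf S^f$ are linearly independent and span $\mathbf{EFSym}$, with product $\mathbf S^f\mathbf S^g=\mathbf S^{f\bullet g}$ (shifted concatenation: $i\mapsto f(i)$ for $i\le n$, $n+i\mapsto g(i)+n$) and coproduct $\Delta\mathbf S^f=\sum_{I\models f}\mathbf S^{\mathrm{std}(f^{[n]\setminus I})}\otimes\mathbf S^{\mathrm{std}(f^I)}$, where $I\models f$ means $f^{-1}(I)\subseteq I$, $f^I(x)=f(x)$ if $f(x)\in I$ and $x$ otherwise, and $\mathrm{std}$ conjugates by the increasing bijection $I\to[|I|]$. $f^0$ is the identity. *)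

theory Defs
  imports "HOL-Library.Poly_Mapping"
begin

text \<open>Maps f : [n] -> [n] are encoded as lists of length n, 0-indexed:
  [n] = {0..<n}, f(i) = f ! i.  (Standardisation is order preserving,
  so the shift from {1..n} to {0..<n} is harmless.)\<close>

definition is_map :: "nat list \<Rightarrow> bool" where
  "is_map f \<longleftrightarrow> (\<forall>x\<in>set f. x < length f)"

definition Maps :: "nat list set" where
  "Maps = {f. is_map f}"

fun fpow :: "nat list \<Rightarrow> nat \<Rightarrow> nat list" where
  "fpow f 0 = [0..<length f]"
| "fpow f (Suc k) = map (\<lambda>j. f ! j) (fpow f k)"

definition shconc :: "nat list \<Rightarrow> nat list \<Rightarrow> nat list" where
  "shconc f g = f @ map (\<lambda>x. x + length f) g"

definition admissible :: "nat set \<Rightarrow> nat list \<Rightarrow> bool" where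
  "admissible I f \<longleftrightarrow> I \<subseteq> {0..<length f} \<and> (\<forall>x<length f. f ! x \<in> I \<longrightarrow> x \<in> I)"

text \<open>std(f^I): f^I(x) = f(x) if f(x) \<in> I, else x, for x \<in> I; then conjugate by
  the increasing bijection I -> {0..<card I}.\<close>
definition restr_std :: "nat list \<Rightarrow> nat set \<Rightarrow> nat list" where
  "restr_std f I = map (\<lambda>x. card {y\<in>I. y < (if f ! x \<in> I then f ! x else x)})
                      (sorted_list_of_set I)"

text \<open>EFSym is modelled via its basis: an element is a finitely supported
  coefficient function on maps (S^f = basis_el f); the tensor square
  has basis S^f \<otimes> S^g, indexed by pairs.\<close>

definition basis_el :: "nat list \<Rightarrow> (nat list \<Rightarrow>\<^sub>0 'k::comm_ring_1)" where
  "basis_el f = Poly_Mapping.single f 1"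

definition ef_one :: "nat list \<Rightarrow>\<^sub>0 'k::comm_ring_1" where
  "ef_one = basis_el []"

definition scale :: "'k::comm_ring_1 \<Rightarrow> ('a \<Rightarrow>\<^sub>0 'k) \<Rightarrow> ('a \<Rightarrow>\<^sub>0 'k)" where
  "scale c x = Poly_Mapping.map (\<lambda>v. c * v) x"

definition lin_ext :: "('a \<Rightarrow> ('b \<Rightarrow>\<^sub>0 'k::comm_ring_1)) \<Rightarrow> ('a \<Rightarrow>\<^sub>0 'k) \<Rightarrow> ('b \<Rightarrow>\<^sub>0 'k)" where
  "lin_ext \<phi> x = (\<Sum>a\<in>Poly_Mapping.keys x. scale (Poly_Mapping.lookup x a) (\<phi> a))"

definition ef_mult :: "(nat list \<Rightarrow>\<^sub>0 'k::comm_ring_1) \<Rightarrow> (nat list \<Rightarrow>\<^sub>0 'k) \<Rightarrow> (nat list \<Rightarrow>\<^sub>0 'k)" where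
  "ef_mult x y = (\<Sum>f\<in>Poly_Mapping.keys x. \<Sum>g\<in>Poly_Mapping.keys y. Poly_Mapping.single (shconc f g) (Poly_Mapping.lookup x f * Poly_Mapping.lookup y g))"

definition coprod_basis :: "nat list \<Rightarrow> (nat list \<times> nat list \<Rightarrow>\<^sub>0 'k::comm_ring_1)" where
  "coprod_basis f = (\<Sum>I\<in>{I. admissible I f}.
      Poly_Mapping.single (restr_std f ({0..<length f} - I), restr_std f I) 1)"

definition ef_coprod :: "(nat list \<Rightarrow>\<^sub>0 'k::comm_ring_1) \<Rightarrow> (nat list \<times> nat list \<Rightarrow>\<^sub>0 'k)" where
  "ef_coprod x = lin_ext coprod_basis x"

definition ef_counit_basis :: "nat list \<Rightarrow> 'k::comm_ring_1" where
  "ef_counit_basis f = (if f = [] then 1 else 0)"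

text \<open>An antipode, given by its values s f = S(S^f) on the basis (extended
  linearly): m (S \<otimes> id) \<Delta> = \<eta> \<epsilon> = m (id \<otimes> S) \<Delta> on every basis element.\<close>
definition is_antipode :: "(nat list \<Rightarrow> (nat list \<Rightarrow>\<^sub>0 'k::comm_ring_1)) \<Rightarrow> bool" where
  "is_antipode s \<longleftrightarrow> (\<forall>f\<in>Maps.
     (\<Sum>gh\<in>Poly_Mapping.keys (coprod_basis f :: nat list \<times> nat list \<Rightarrow>\<^sub>0 'k).
         scale (Poly_Mapping.lookup (coprod_basis f) gh) (ef_mult (s (fst gh)) (basis_el (snd gh))))
       = scale (ef_counit_basis f) ef_one
   \<and> (\<Sum>gh\<in>Poly_Mapping.keys (coprod_basis f :: nat list \<times> nat list \<Rightarrow>\<^sub>0 'k).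
         scale (Poly_Mapping.lookup (coprod_basis f) gh) (ef_mult (basis_el (fst gh)) (s (snd gh))))
       = scale (ef_counit_basis f) ef_one)"

definition ef_span :: "nat list set \<Rightarrow> (nat list \<Rightarrow>\<^sub>0 'k::comm_ring_1) set" where
  "ef_span B = {x. Poly_Mapping.keys x \<subseteq> B}"

text \<open>Closure under linear combinations is automatic.\<close>
definition hopf_subalg_spanned :: "'k::comm_ring_1 itself \<Rightarrow> nat list set \<Rightarrow> bool" where
  "hopf_subalg_spanned _ B \<longleftrightarrow>
     B \<subseteq> Maps
   \<and> (ef_one :: nat list \<Rightarrow>\<^sub>0 'k) \<in> ef_span B
   \<and> (\<forall>x\<in>(ef_span B :: (nat list \<Rightarrow>\<^sub>0 'k) set). \<forall>y\<in>ef_span B. ef_mult x y \<in> ef_span B)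
   \<and> (\<forall>x\<in>(ef_span B :: (nat list \<Rightarrow>\<^sub>0 'k) set). Poly_Mapping.keys (ef_coprod x) \<subseteq> B \<times> B)
   \<and> (\<forall>s :: nat list \<Rightarrow> (nat list \<Rightarrow>\<^sub>0 'k). is_antipode s \<longrightarrow>
        (\<forall>x\<in>ef_span B. lin_ext s x \<in> ef_span B))"

end

theory Submission imports Defs begin

lemma lookup_scale: "Poly_Mapping.lookup (scale c x) k = c * Poly_Mapping.lookup x k"
  unfolding scale_def by (simp add: Poly_Mapping.map.rep_eq when_def)

lemma keys_scale: "Poly_Mapping.keys (scale c x) \<subseteq> Poly_Mapping.keys x"
  by (auto simp: in_keys_iff lookup_scale)

lemma span_zero: "0 \<in> ef_span B" by (simp add: ef_span_def)
lemma span_add: "x \<in> ef_span B \<Longrightarrow> y \<in> ef_span B \<Longrightarrow> x + y \<in> ef_span B"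
  using keys_add[of x y] by (auto simp: ef_span_def)
lemma span_uminus: "x \<in> ef_span B \<Longrightarrow> - x \<in> ef_span B"
  by (auto simp: ef_span_def in_keys_iff)
lemma span_diff: "x \<in> ef_span B \<Longrightarrow> y \<in> ef_span B \<Longrightarrow> x - y \<in> ef_span B"
  using span_add[of x B "-y"] span_uminus[of y B] by simp
lemma span_scale: "x \<in> ef_span B \<Longrightarrow> scale c x \<in> ef_span B"
  using keys_scale[of c x] by (auto simp: ef_span_def)
lemma span_sum: "(\<And>a. a \<in> A \<Longrightarrow> F a \<in> ef_span B) \<Longrightarrow> sum F A \<in> ef_span B"
  by (induction A rule: infinite_finite_induct) (auto simp: span_zero span_add)
lemma span_single: "k \<in> B \<Longrightarrow> Poly_Mapping.single k c \<in> ef_span B"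
  by (auto simp: ef_span_def)

lemma keys_sum_sub: "Poly_Mapping.keys (sum F A) \<subseteq> (\<Union>a\<in>A. Poly_Mapping.keys (F a))"
  by (rule keys_sum)

lemma ef_mult_one_right: "ef_mult x (basis_el []) = (x :: nat list \<Rightarrow>\<^sub>0 'k::field)"
proof -
  have "ef_mult x (basis_el []) = (\<Sum>f\<in>Poly_Mapping.keys x. Poly_Mapping.single f (Poly_Mapping.lookup x f))"
    by (simp add: ef_mult_def basis_el_def shconc_def)
  also have "\<dots> = x"
    by (rule poly_mapping_eqI) (auto simp: lookup_sum lookup_single when_def in_keys_iff
        intro: sum.delta'[THEN trans])
  finally show ?thesis .
qed


lemma funpow_range: "(\<And>x. x < n \<Longrightarrow> F x < n) \<Longrightarrow> x < n \<Longrightarrow> (F ^^ k) x < n"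
  by (induction k) auto

lemma g_forward:
  assumes rng: "\<And>x. x < n \<Longrightarrow> F x < n"
    and J: "J \<subseteq> {0..<n}" and fc: "\<And>x. x \<in> J \<Longrightarrow> F x \<in> J"
    and x: "x \<in> J"
  shows "((\<lambda>x. if F x \<in> J then F x else x) ^^ k) x = (F ^^ k) x \<and> (F ^^ k) x \<in> J"
  by (induction k) (use x fc in auto)

lemma g_backward:
  assumes rng: "\<And>x. x < n \<Longrightarrow> F x < n"
    and I: "I \<subseteq> {0..<n}" and bc: "\<And>x. x < n \<Longrightarrow> F x \<in> I \<Longrightarrow> x \<in> I"
    and pq: "\<And>x. x < n \<Longrightarrow> (F ^^ p) x = (F ^^ q) x" and "p < q"
    and x: "x \<in> I"
  shows "((\<lambda>x. if F x \<in> I then F x else x) ^^ p) x = ((\<lambda>x. if F x \<in> I then F x else x) ^^ q) x"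
proof -
  define g where "g = (\<lambda>x. if F x \<in> I then F x else x)"
  have xn: "x < n" using x I by auto
  show ?thesis
  proof (cases "\<forall>k\<le>q. (F ^^ k) x \<in> I")
    case True
    have "k \<le> q \<Longrightarrow> (g ^^ k) x = (F ^^ k) x" for k
      by (induction k) (use True in \<open>auto simp: g_def\<close>)
    then show ?thesis using pq[OF xn] \<open>p < q\<close> unfolding g_def[symmetric] by simp
  next
    case False
    then obtain m' where m': "m' \<le> q" "(F ^^ m') x \<notin> I" by auto
    define m0 where "m0 = (LEAST k. (F ^^ k) x \<notin> I)"
    have m0: "(F ^^ m0) x \<notin> I" unfolding m0_def by (rule LeastI[of _ m']) (rule m'(2))
    have m0le: "m0 \<le> m'" unfolding m0_def by (rule Least_le) (rule m'(2))
    have below: "k < m0 \<Longrightarrow> (F ^^ k) x \<in> I" for k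
      using not_less_Least[of k "\<lambda>k. (F ^^ k) x \<notin> I"] unfolding m0_def by blast
    have "m0 \<noteq> 0" using m0 x by (cases m0) auto
    then obtain m where mm: "m0 = Suc m" by (cases m0) auto
    have gk: "k \<le> m \<Longrightarrow> (g ^^ k) x = (F ^^ k) x" for k
    proof (induction k)
      case (Suc k)
      then have "(F ^^ Suc k) x \<in> I" using below[of "Suc k"] mm by simp
      then show ?case using Suc by (auto simp: g_def)
    qed simp
    have fix1: "g ((F ^^ m) x) = (F ^^ m) x" using m0 mm by (auto simp: g_def)
    have gk2: "(g ^^ (m + j)) x = (F ^^ m) x" for j
      by (induction j) (use gk fix1 in auto)
    have out: "(F ^^ (Suc m + j)) x \<notin> I" for j
    proof (induction j)
      case 0 then show ?case using m0 mm by simp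
    next
      case (Suc j)
      have "(F ^^ (Suc m + j)) x < n" by (rule funpow_range[OF rng xn])
      then show ?case using Suc bc[of "(F ^^ (Suc m + j)) x"] by auto
    qed
    have "m < p"
    proof (rule ccontr)
      assume "\<not> m < p"
      then have "(F ^^ p) x \<in> I"
        using below mm by (cases "p = m") (auto simp: gk)
      moreover have "Suc m \<le> q" using m0le m'(1) mm by simp
      then have "(F ^^ q) x \<notin> I" using out[of "q - Suc m"] by simp
      ultimately show False using pq[OF xn] by simp
    qed
    then have "(g ^^ p) x = (F ^^ m) x" "(g ^^ q) x = (F ^^ m) x"
      using gk2[of "p - m"] gk2[of "q - m"] \<open>p < q\<close> by auto
    then show ?thesis unfolding g_def by simp
  qed
qed


lemma fpow_eq: "fpow f k = map ((!) f ^^ k) [0..<length f]"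
  by (induction k) auto

lemma fpow_eq_iff: "fpow f p = fpow f q \<longleftrightarrow> (\<forall>x<length f. ((!) f ^^ p) x = ((!) f ^^ q) x)"
  by (auto simp: fpow_eq map_eq_conv)

lemma is_map_iff: "is_map f \<longleftrightarrow> (\<forall>x<length f. f ! x < length f)"
  by (auto simp: is_map_def in_set_conv_nth) (use nth_mem in blast)

lemma shconc_nth: "i < length f + length g \<Longrightarrow>
   shconc f g ! i = (if i < length f then f ! i else g ! (i - length f) + length f)"
  by (auto simp: shconc_def nth_append)

lemma shconc_map: "is_map f \<Longrightarrow> is_map g \<Longrightarrow> is_map (shconc f g)"
proof -
  assume a: "is_map f" "is_map g"
  have l: "length (shconc f g) = length f + length g" by (simp add: shconc_def)
  show ?thesis unfolding is_map_iff l
  proof (intro allI impI)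
    fix x assume x: "x < length f + length g"
    show "shconc f g ! x < length f + length g"
      using a x by (cases "x < length f") (auto simp: is_map_iff shconc_nth[OF x])
  qed
qed

lemma shconc_pow:
  assumes "is_map f" "is_map g" "i < length f + length g"
  shows "((!) (shconc f g) ^^ k) i =
     (if i < length f then ((!) f ^^ k) i else ((!) g ^^ k) (i - length f) + length f)"
proof (induction k)
  case (Suc k)
  have rf: "\<And>x. x < length f \<Longrightarrow> f ! x < length f" and rg: "\<And>x. x < length g \<Longrightarrow> g ! x < length g"
    using assms by (auto simp: is_map_iff)
  show ?case
  proof (cases "i < length f")
    case True
    have "((!) f ^^ k) i < length f" by (rule funpow_range[OF rf True])
    then show ?thesis using Suc True by (simp add: shconc_nth)
  next
    case False
    have "((!) g ^^ k) (i - length f) < length g" by (rule funpow_range[OF rg]) (use assms False in auto)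
    then show ?thesis using Suc False by (simp add: shconc_nth)
  qed
qed simp

definition rk :: "nat set \<Rightarrow> nat \<Rightarrow> nat" where
  "rk J y = card {z\<in>J. z < y}"

lemma rk_nth:
  assumes "finite J" "i < card J"
  shows "rk J (sorted_list_of_set J ! i) = i"
proof -
  define xs where "xs = sorted_list_of_set J"
  have ss: "sorted_wrt (<) xs" and sx: "set xs = J" and lx: "length xs = card J" and dx: "distinct xs"
    using assms by (auto simp: xs_def)
  have "{z\<in>J. z < xs ! i} = (!) xs ` {..<i}"
  proof
    show "{z\<in>J. z < xs ! i} \<subseteq> (!) xs ` {..<i}"
    proof
      fix z assume "z \<in> {z\<in>J. z < xs ! i}"
      then obtain j where j: "j < length xs" "z = xs ! j" "xs ! j < xs ! i" using sx by (auto simp: in_set_conv_nth)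
      have "j < i"
      proof (rule ccontr)
        assume "\<not> j < i"
        then have "i \<le> j" by simp
        then have "xs ! i \<le> xs ! j" using ss j(1) sorted_wrt_nth_less[OF ss, of i j]
          by (cases "i = j") auto
        then show False using j by simp
      qed
      then show "z \<in> (!) xs ` {..<i}" using j by auto
    qed
  next
    show "(!) xs ` {..<i} \<subseteq> {z\<in>J. z < xs ! i}"
      using sorted_wrt_nth_less[OF ss] assms lx sx by auto
  qed
  moreover have "inj_on ((!) xs) {..<i}" using dx assms lx by (auto simp: inj_on_def nth_eq_iff_index_eq)
  ultimately show ?thesis by (simp add: rk_def xs_def card_image)
qed

lemma rk_mem:
  assumes "finite J" "y \<in> J"
  shows "rk J y < card J \<and> sorted_list_of_set J ! rk J y = y"
proof -
  obtain i where "i < card J" "y = sorted_list_of_set J ! i"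
    using assms by (metis in_set_conv_nth length_sorted_list_of_set set_sorted_list_of_set)
  then show ?thesis using rk_nth[OF assms(1)] by auto
qed

lemma nth_sl_mem: "finite J \<Longrightarrow> i < card J \<Longrightarrow> sorted_list_of_set J ! i \<in> J"
  by (metis length_sorted_list_of_set nth_mem set_sorted_list_of_set)

lemma restr_std_alt: "restr_std f J = map (\<lambda>x. rk J ((\<lambda>x. if f ! x \<in> J then f ! x else x) x)) (sorted_list_of_set J)"
  by (simp add: restr_std_def rk_def)

lemma restr_std_props:
  assumes fin: "finite J"
  shows "length (restr_std f J) = card J"
    and "is_map (restr_std f J)"
    and "\<And>i. i < card J \<Longrightarrow> ((!) (restr_std f J) ^^ k) i
           = rk J (((\<lambda>x. if f ! x \<in> J then f ! x else x) ^^ k) (sorted_list_of_set J ! i))"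
proof -
  define g where "g = (\<lambda>x. if f ! x \<in> J then f ! x else x)"
  have gJ: "x \<in> J \<Longrightarrow> g x \<in> J" for x by (auto simp: g_def)
  have gkJ: "x \<in> J \<Longrightarrow> (g ^^ k) x \<in> J" for x k by (induction k) (auto simp: gJ)
  have nth: "i < card J \<Longrightarrow> restr_std f J ! i = rk J (g (sorted_list_of_set J ! i))" for i
    by (simp add: restr_std_alt g_def)
  show l: "length (restr_std f J) = card J" by (simp add: restr_std_def)
  show "is_map (restr_std f J)"
    unfolding is_map_iff l using nth rk_mem[OF fin] gJ nth_sl_mem[OF fin] by auto
  show "\<And>i. i < card J \<Longrightarrow> ((!) (restr_std f J) ^^ k) i
           = rk J (((\<lambda>x. if f ! x \<in> J then f ! x else x) ^^ k) (sorted_list_of_set J ! i))"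
    unfolding g_def[symmetric]
  proof (induction k)
    case 0 then show ?case using rk_nth[OF fin] by simp
  next
    case (Suc k)
    have m: "(g ^^ k) (sorted_list_of_set J ! i) \<in> J" using gkJ nth_sl_mem[OF fin Suc.prems] by blast
    show ?case using Suc rk_mem[OF fin m] nth by simp
  qed
qed


definition Bs :: "nat \<Rightarrow> nat \<Rightarrow> nat list set" where
  "Bs p q = {f \<in> Maps. fpow f p = fpow f q}"

lemma Bs_iff: "f \<in> Bs p q \<longleftrightarrow> is_map f \<and> (\<forall>x<length f. ((!) f ^^ p) x = ((!) f ^^ q) x)"
  by (simp add: Bs_def Maps_def fpow_eq_iff)

lemma nil_Bs: "[] \<in> Bs p q" by (simp add: Bs_iff is_map_def)

lemma shconc_Bs: "f \<in> Bs p q \<Longrightarrow> g \<in> Bs p q \<Longrightarrow> shconc f g \<in> Bs p q"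
proof -
  assume a: "f \<in> Bs p q" "g \<in> Bs p q"
  have l: "length (shconc f g) = length f + length g" by (simp add: shconc_def)
  show ?thesis unfolding Bs_iff l
  proof (intro conjI allI impI)
    show "is_map (shconc f g)" using a by (simp add: Bs_iff shconc_map)
    fix x assume x: "x < length f + length g"
    show "((!) (shconc f g) ^^ p) x = ((!) (shconc f g) ^^ q) x"
      using a x by (cases "x < length f") (auto simp: Bs_iff shconc_pow)
  qed
qed

lemma restr_Bs:
  assumes f: "f \<in> Bs p q" and pq: "p < q" and adm: "admissible I f"
  shows "restr_std f I \<in> Bs p q" "restr_std f ({0..<length f} - I) \<in> Bs p q"
proof -
  have im: "is_map f" and fp: "\<And>x. x < length f \<Longrightarrow> ((!) f ^^ p) x = ((!) f ^^ q) x"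
    using f by (auto simp: Bs_iff)
  have rng: "\<And>x. x < length f \<Longrightarrow> f ! x < length f" using im by (simp add: is_map_iff)
  have I: "I \<subseteq> {0..<length f}" and bc: "\<And>x. x < length f \<Longrightarrow> f ! x \<in> I \<Longrightarrow> x \<in> I"
    using adm by (auto simp: admissible_def)
  have finI: "finite I" using I finite_subset by blast
  show "restr_std f I \<in> Bs p q"
    unfolding Bs_iff restr_std_props(1)[OF finI]
  proof (intro conjI allI impI restr_std_props(2)[OF finI])
    fix i assume i: "i < card I"
    have "sorted_list_of_set I ! i \<in> I" by (rule nth_sl_mem[OF finI i])
    then show "((!) (restr_std f I) ^^ p) i = ((!) (restr_std f I) ^^ q) i"
      unfolding restr_std_props(3)[OF finI i]
      using g_backward[of "length f" "(!) f" I p q, OF rng I bc fp pq] by auto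
  qed
  define J where "J = {0..<length f} - I"
  have finJ: "finite J" by (simp add: J_def)
  have J: "J \<subseteq> {0..<length f}" by (auto simp: J_def)
  have fc: "\<And>x. x \<in> J \<Longrightarrow> f ! x \<in> J" using bc rng by (auto simp: J_def)
  show "restr_std f ({0..<length f} - I) \<in> Bs p q"
    unfolding J_def[symmetric] Bs_iff restr_std_props(1)[OF finJ]
  proof (intro conjI allI impI restr_std_props(2)[OF finJ])
    fix i assume i: "i < card J"
    have x: "sorted_list_of_set J ! i \<in> J" by (rule nth_sl_mem[OF finJ i])
    then have xn: "sorted_list_of_set J ! i < length f" using J by auto
    show "((!) (restr_std f J) ^^ p) i = ((!) (restr_std f J) ^^ q) i"
      unfolding restr_std_props(3)[OF finJ i]
      using g_forward[of "length f" "(!) f" J, OF rng J fc x] fp[OF xn] by metis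
  qed
qed


lemma keys_coprod_basis:
  "Poly_Mapping.keys (coprod_basis f :: nat list \<times> nat list \<Rightarrow>\<^sub>0 'k::field)
     \<subseteq> (\<lambda>I. (restr_std f ({0..<length f} - I), restr_std f I)) ` {I. admissible I f}"
  unfolding coprod_basis_def using keys_sum_sub by fastforce

lemma span_mult:
  assumes "x \<in> ef_span B" "y \<in> ef_span B"
    and sh: "\<And>f g. f \<in> B \<Longrightarrow> g \<in> B \<Longrightarrow> shconc f g \<in> B"
  shows "ef_mult x y \<in> ef_span B"
  unfolding ef_mult_def
  by (intro span_sum span_single) (use assms in \<open>auto simp: ef_span_def\<close>)

lemma span_lin_ext:
  assumes "\<And>a. a \<in> Poly_Mapping.keys x \<Longrightarrow> s a \<in> ef_span B"
  shows "lin_ext s x \<in> ef_span B"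
  unfolding lin_ext_def by (intro span_sum span_scale assms)

lemma restr_std_empty: "restr_std f {} = []" by (simp add: restr_std_def)

lemma restr_std_full: "is_map f \<Longrightarrow> restr_std f {0..<length f} = f"
proof -
  assume im: "is_map f"
  have rng: "\<And>x. x < length f \<Longrightarrow> f ! x < length f" using im by (simp add: is_map_iff)
  have c: "y \<le> n \<Longrightarrow> card {z. z < n \<and> z < y} = y" for y n :: nat
  proof -
    assume "y \<le> n" then have "{z. z < n \<and> z < y} = {..<y}" by auto
    then show ?thesis by simp
  qed
  show ?thesis
    by (rule nth_equalityI) (auto simp: restr_std_def rng c less_imp_le)
qed

lemma admissible_finite: "finite {I. admissible I f}"
  by (rule finite_subset[of _ "Pow {0..<length f}"]) (auto simp: admissible_def)

lemma lookup_cb_key0: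
  assumes "is_map f"
  shows "Poly_Mapping.lookup (coprod_basis f :: nat list \<times> nat list \<Rightarrow>\<^sub>0 'k::field) (f, []) = 1"
proof -
  have eq: "I \<in> {I. admissible I f} \<Longrightarrow>
       ((restr_std f ({0..<length f} - I), restr_std f I) = (f, [])) = (I = {})" for I
  proof
    assume I: "I \<in> {I. admissible I f}" and e: "(restr_std f ({0..<length f} - I), restr_std f I) = (f, [])"
    have "finite I" using I finite_subset by (auto simp: admissible_def)
    moreover have "card I = 0" using e restr_std_props(1)[of I f] \<open>finite I\<close> by auto
    ultimately show "I = {}" by simp
  qed (simp add: restr_std_empty restr_std_full[OF assms])
  have "Poly_Mapping.lookup (coprod_basis f :: nat list \<times> nat list \<Rightarrow>\<^sub>0 'k) (f, [])
     = (\<Sum>I\<in>{I. admissible I f}. if I = {} then 1 else 0)"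
    unfolding coprod_basis_def lookup_sum lookup_single when_def
    by (rule sum.cong) (use eq in auto)
  also have "\<dots> = 1" using admissible_finite[of f] by (simp add: admissible_def)
  finally show ?thesis .
qed

locale goodB =
  fixes B :: "nat list set"
  assumes Bm: "B \<subseteq> Maps" and nil: "[] \<in> B"
    and sh: "\<And>f g. f \<in> B \<Longrightarrow> g \<in> B \<Longrightarrow> shconc f g \<in> B"
    and rs1: "\<And>f I. f \<in> B \<Longrightarrow> admissible I f \<Longrightarrow> restr_std f I \<in> B"
    and rs2: "\<And>f I. f \<in> B \<Longrightarrow> admissible I f \<Longrightarrow> restr_std f ({0..<length f} - I) \<in> B"
begin

lemma keys_cb_B: "f \<in> B \<Longrightarrow> Poly_Mapping.keys (coprod_basis f :: nat list \<times> nat list \<Rightarrow>\<^sub>0 'k::field) \<subseteq> B \<times> B"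
  using keys_coprod_basis[of f] rs1 rs2 by fastforce

lemma antipode_span:
  assumes s: "is_antipode (s :: nat list \<Rightarrow> (nat list \<Rightarrow>\<^sub>0 'k::field))"
  shows "f \<in> B \<Longrightarrow> s f \<in> ef_span B"
proof (induction "length f" arbitrary: f rule: less_induct)
  case less
  define cb where "cb = (coprod_basis f :: nat list \<times> nat list \<Rightarrow>\<^sub>0 'k)"
  define K where "K = Poly_Mapping.keys cb"
  define T where "T = (\<lambda>gh. scale (Poly_Mapping.lookup cb gh) (ef_mult (s (fst gh)) (basis_el (snd gh))))"
  have fM: "f \<in> Maps" using less.prems Bm by auto
  then have im: "is_map f" by (simp add: Maps_def)
  have l1: "Poly_Mapping.lookup cb (f, []) = 1" unfolding cb_def by (rule lookup_cb_key0[OF im])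
  have k0: "(f, []) \<in> K" unfolding K_def using l1 by (simp add: in_keys_iff)
  have eq: "sum T K = scale (ef_counit_basis f) ef_one"
    using s fM unfolding is_antipode_def T_def K_def cb_def by blast
  have finK: "finite K" by (simp add: K_def)
  have T0: "T (f, []) = s f"
    by (rule poly_mapping_eqI) (simp add: T_def l1 lookup_scale ef_mult_one_right)
  have "sum T K = T (f, []) + sum T (K - {(f, [])})" by (rule sum.remove[OF finK k0])
  then have sf: "s f = scale (ef_counit_basis f) ef_one - sum T (K - {(f, [])})"
    using eq T0 by (simp add: algebra_simps)
  have one: "(ef_one :: nat list \<Rightarrow>\<^sub>0 'k) \<in> ef_span B"
    using nil by (simp add: ef_one_def basis_el_def span_single)
  have rest: "T gh \<in> ef_span B" if gh: "gh \<in> K - {(f, [])}" for gh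
  proof -
    obtain I where I: "admissible I f" "gh = (restr_std f ({0..<length f} - I), restr_std f I)"
      using gh keys_coprod_basis[of f] unfolding K_def cb_def by blast
    have "I \<noteq> {}" using I gh restr_std_empty restr_std_full[OF im] by auto
    moreover have Isub: "I \<subseteq> {0..<length f}" using I by (simp add: admissible_def)
    ultimately have "card I > 0" using finite_subset[OF Isub] by (simp add: card_gt_0_iff)
    moreover have "length (fst gh) = length f - card I"
      using I Isub by (simp add: restr_std_props(1) card_Diff_subset finite_subset)
    ultimately have lt: "length (fst gh) < length f" using card_mono[OF _ Isub] by simp
    have inB: "fst gh \<in> B" "snd gh \<in> B" using I rs1 rs2 less.prems by auto
    have "s (fst gh) \<in> ef_span B" using less.hyps[OF lt inB(1)] .
    moreover have "basis_el (snd gh) \<in> ef_span B" using inB(2) by (simp add: basis_el_def span_single)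
    ultimately show ?thesis unfolding T_def by (intro span_scale span_mult sh)
  qed
  show ?case unfolding sf by (intro span_diff span_scale one span_sum rest)
qed

lemma hopf: "hopf_subalg_spanned TYPE('k::field) B"
  unfolding hopf_subalg_spanned_def
proof (intro conjI ballI allI impI)
  show "B \<subseteq> Maps" by (rule Bm)
  show "(ef_one :: nat list \<Rightarrow>\<^sub>0 'k) \<in> ef_span B"
    using nil by (simp add: ef_one_def basis_el_def span_single)
  show "ef_mult x y \<in> ef_span B" if "x \<in> (ef_span B :: (nat list \<Rightarrow>\<^sub>0 'k) set)" "y \<in> ef_span B" for x y
    using that by (intro span_mult sh)
  show "Poly_Mapping.keys (ef_coprod x) \<subseteq> B \<times> B" if "x \<in> (ef_span B :: (nat list \<Rightarrow>\<^sub>0 'k) set)" for x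
  proof -
    have "Poly_Mapping.keys (ef_coprod x) \<subseteq> (\<Union>a\<in>Poly_Mapping.keys x. Poly_Mapping.keys (scale (Poly_Mapping.lookup x a) (coprod_basis a :: _ \<Rightarrow>\<^sub>0 'k)))"
      unfolding ef_coprod_def lin_ext_def by (rule keys_sum_sub)
    also have "\<dots> \<subseteq> B \<times> B"
      using that keys_scale keys_cb_B by (fastforce simp: ef_span_def)
    finally show ?thesis .
  qed
  show "lin_ext s x \<in> ef_span B" if "is_antipode (s :: nat list \<Rightarrow> (nat list \<Rightarrow>\<^sub>0 'k))" "x \<in> ef_span B" for s x
    using that by (intro span_lin_ext antipode_span) (auto simp: ef_span_def)
qed

end

theorem mainTheorem15:
  fixes p q :: nat
  assumes "p < q"
  shows "hopf_subalg_spanned TYPE('k::field) {f \<in> Maps. fpow f p = fpow f q}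
       \<and> hopf_subalg_spanned TYPE('k::field) {f \<in> Maps. \<forall>i<length f. f ! (f ! i) = f ! i}"
proof -
  have g: "goodB (Bs p q)" if "p < q" for p q :: nat
    apply unfold_locales
    subgoal by (auto simp: Bs_def)
    subgoal by (rule nil_Bs)
    subgoal by (rule shconc_Bs)
    subgoal using that by (blast intro: restr_Bs)
    subgoal using that by (blast intro: restr_Bs)
    done
  have e: "{f \<in> Maps. \<forall>i<length f. f ! (f ! i) = f ! i} = Bs 1 2"
    by (auto simp: Bs_iff Maps_def numeral_2_eq_2)
  show ?thesis using goodB.hopf[OF g[OF assms]] goodB.hopf[OF g[of 1 2]] e
    by (simp add: Bs_def)
qed

end
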